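(* Let $P\subset\mathbb R^2$ be an $\mathbb R$-$\Delta_2$-free polygon with rational diameter $l=1+2a>1$ (i.e. $a>0$), and suppose the segment $\mathrm{conv}((-a,0),(1+a,0))$ is contained in $P$. Then for every $b\in\mathbb Z$ the interior of $P$ is disjoint from the segments $\mathrm{conv}((b-a,1),(b+a,1))$ and $\mathrm{conv}((b-a,-1),(b+a,-1))$. In particular, if $a\ge\frac12$, then $P\subset\{(x,y): -1\le y\le 1\}$ and $\mathrm{width}(P)\le 2$.
   Context: A polygon is a two-dimensional convex polytope in $\mathbb R^2$. $\Delta_2=\mathrm{conv}(\mathbf 0,e_1,e_2)$. An $\mathbb R$-unimodular transformation is $T(x)=Mx+b$ with $M\in\mathrm{GL}_2(\mathbb Z)$, $b\in\mathbb R^2$; an $\mathbb R$-unimodular copy of $X$ is $T(X)$. A convex set is $\mathbb R$-$\Delta_2$-free if its relative interior contains no $\mathbb R$-unimodular copy of $\Delta_2$. The rational diameter of a convex body $K$ is $\max\{l\ge0: T(\mathrm{conv}(\mathbf 0,le_1))\subset K$ for some $\mathbb R$-unimodular $T\}$. Lattice width: $\mathrm{width}(K)=\inf_{u\in(\mathbb Z^2)^*\setminus\{0\}}\sup_{x,y\in K}|u(x)-u(y)|$. *)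

theory Defs
  imports "HOL-Analysis.Analysis"
begin

definition polygon :: "(real \<times> real) set \<Rightarrow> bool" where
  "polygon P \<longleftrightarrow> polytope P \<and> aff_dim P = 2"

definition R_unimodular :: "(real \<times> real \<Rightarrow> real \<times> real) \<Rightarrow> bool" where
  "R_unimodular T \<longleftrightarrow>
     (\<exists>m11 m12 m21 m22 :: int. \<exists>b1 b2 :: real.
        \<bar>m11 * m22 - m12 * m21\<bar> = 1 \<and>
        T = (\<lambda>(x, y). (of_int m11 * x + of_int m12 * y + b1,
                       of_int m21 * x + of_int m22 * y + b2)))"

definition Delta2 :: "(real \<times> real) set" where
  "Delta2 = convex hull {(0, 0), (1, 0), (0, 1)}"

definition R_Delta2_free :: "(real \<times> real) set \<Rightarrow> bool" where
  "R_Delta2_free K \<longleftrightarrow> \<not> (\<exists>T. R_unimodular T \<and> T ` Delta2 \<subseteq> rel_interior K)"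

definition rational_diameter :: "(real \<times> real) set \<Rightarrow> real" where
  "rational_diameter K =
     (GREATEST l. l \<ge> 0 \<and> (\<exists>T. R_unimodular T \<and> T ` closed_segment (0, 0) (l, 0) \<subseteq> K))"

definition lattice_width :: "(real \<times> real) set \<Rightarrow> real" where
  "lattice_width K =
     (INF u \<in> {u :: int \<times> int. u \<noteq> (0, 0)}.
        SUP xy \<in> K \<times> K. \<bar>of_int (fst u) * (fst (fst xy) - fst (snd xy))
                          + of_int (snd u) * (snd (fst xy) - snd (snd xy))\<bar>)"

end

theory Submission
  imports Defs
begin

lemma seg_pt:
  fixes a t :: real
  assumes "a > 0" "-a \<le> t" "t \<le> 1 + a"
  shows "(t, 0) \<in> closed_segment (- a, 0) (1 + a, (0::real))"
proof -
  define u where "u = (t + a) / (1 + 2*a)"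
  have "0 \<le> u" "u \<le> 1" using assms by (auto simp: field_simps u_def)
  moreover have "(t, 0) = (1 - u) *\<^sub>R (- a, 0) + u *\<^sub>R (1 + a, (0::real))"
  proof -
    have "1 + 2*a \<noteq> 0" using assms by simp
    hence h: "u * (1+2*a) = t + a" by (simp add: u_def)
    have "(1 - u) * (- a) + u * (1 + a) = u * (1+2*a) - a" by (simp add: algebra_simps)
    hence "t = (1 - u) * (- a) + u * (1 + a)" using h by simp
    thus ?thesis by simp
  qed
  ultimately show ?thesis unfolding in_segment by blast
qed

lemma key:
  fixes P :: "(real \<times> real) set" and a c e :: real and bi :: int
  assumes cvx: "convex P" and a: "a > 0"
    and seg: "closed_segment (- a, 0) (1 + a, 0) \<subseteq> P"
    and q: "(c, e) \<in> interior P" and cb: "\<bar>c - of_int bi\<bar> \<le> a"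
    and e: "e = 1 \<or> e = -1"
  shows "\<exists>T. R_unimodular T \<and> T ` Delta2 \<subseteq> interior P"
proof -
  define b where "b = (of_int bi :: real)"
  obtain \<delta> where dpos: "\<delta> > 0" and ball: "ball (c, e) \<delta> \<subseteq> interior P"
    using q open_interior openE by blast
  define s where "s = min (1/2) (min a (\<delta> / (4 + \<bar>b\<bar>)))"
  have s0: "s > 0" using a dpos by (simp add: s_def)
  have s1: "s \<le> 1/2" "s \<le> a" "s \<le> \<delta> / (4 + \<bar>b\<bar>)" unfolding s_def
    by (rule min.cobounded1, rule min.coboundedI2[OF min.cobounded1], rule min.coboundedI2[OF min.cobounded2])
  define \<sigma> where "\<sigma> = s / (2 * (1 - s))"
  have sig0: "0 \<le> \<sigma>" using s0 s1 by (simp add: \<sigma>_def)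
  have sigs: "\<sigma> \<le> s" using s0 s1 by (simp add: \<sigma>_def field_simps)
  have siga: "\<sigma> \<le> a" using sigs s1 by linarith
  define d where "d = c - b"
  have dabs: "\<bar>d\<bar> \<le> a" using cb by (simp add: d_def b_def)
  define \<alpha> where "\<alpha> = - \<sigma> + d * (a - \<sigma>) / a"
  define x where "x = (1 - s) * \<alpha> + s * c"
  have t1: "\<bar>d * (a - \<sigma>) / a\<bar> \<le> a - \<sigma>"
  proof -
    have "\<bar>d * (a - \<sigma>)\<bar> \<le> a * (a - \<sigma>)"
      using dabs siga by (simp add: abs_mult mult_right_mono)
    thus ?thesis using a by (simp add: divide_le_eq abs_divide mult.commute)
  qed
  have al1: "-a \<le> \<alpha>" using abs_le_D2[OF t1] unfolding \<alpha>_def by linarith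
  have al2: "\<alpha> + 1 / (1 - s) \<le> 1 + a"
  proof -
    have "1 / (1 - s) = 1 + 2 * \<sigma>" using s1 by (simp add: \<sigma>_def field_simps)
    thus ?thesis using abs_le_D1[OF t1] unfolding \<alpha>_def by linarith
  qed
  have ad: "\<bar>\<alpha> - d\<bar> \<le> 2 * s"
  proof -
    have "\<alpha> - d = - \<sigma> - d * \<sigma> / a" using a by (simp add: \<alpha>_def field_simps)
    moreover have "\<bar>d * \<sigma> / a\<bar> \<le> \<sigma>"
    proof -
      have "\<bar>d * \<sigma>\<bar> \<le> a * \<sigma>" using dabs sig0 by (simp add: abs_mult mult_right_mono)
      thus ?thesis using a by (simp add: divide_le_eq abs_divide mult.commute)
    qed
    ultimately show ?thesis using sigs sig0 by linarith
  qed
  have xb: "x + b - c = (1 - s) * (\<alpha> - d) + s * b"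
    by (simp add: x_def d_def algebra_simps)
  have xbabs: "\<bar>x + b - c\<bar> \<le> s * (2 + \<bar>b\<bar>)"
  proof -
    have "\<bar>(1 - s) * (\<alpha> - d)\<bar> \<le> 2 * s"
    proof -
      have "\<bar>(1 - s) * (\<alpha> - d)\<bar> = (1 - s) * \<bar>\<alpha> - d\<bar>" using s1 by (simp add: abs_mult)
      also have "\<dots> \<le> \<bar>\<alpha> - d\<bar>" using s0 s1 by (intro mult_left_le_one_le) auto
      finally show ?thesis using ad by linarith
    qed
    moreover have "\<bar>s * b\<bar> = s * \<bar>b\<bar>" using s0 by (simp add: abs_mult)
    ultimately show ?thesis unfolding xb using abs_triangle_ineq[of "(1 - s) * (\<alpha> - d)" "s * b"]
      by (simp add: algebra_simps)
  qed
  have cl: "closure P \<supseteq> P" by (rule closure_subset)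
  have pos: "1 / (1 - s) > 0" using s1 by simp
  have A: "(\<alpha>, 0) \<in> closure P"
  proof -
    have "\<alpha> \<le> 1 + a" using al2 pos by linarith
    thus ?thesis using seg_pt[OF a al1] seg cl by blast
  qed
  have B: "(\<alpha> + 1/(1-s), 0) \<in> closure P"
  proof -
    have "-a \<le> \<alpha> + 1/(1-s)" using al1 pos by linarith
    thus ?thesis using seg_pt[OF a _ al2] seg cl by blast
  qed
  have os: "open_segment (c, e) p \<subseteq> interior P" if "p \<in> closure P" for p
    using in_interior_closure_convex_segment[OF cvx q that] .
  have u0: "(x, s * e) \<in> interior P"
  proof -
    have "(x, s * e) = (1 - (1 - s)) *\<^sub>R (c, e) + (1 - s) *\<^sub>R (\<alpha>, 0)"
      by (simp add: x_def algebra_simps)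
    moreover have "(c, e) \<noteq> (\<alpha>, 0)" using e by auto
    ultimately have "(x, s * e) \<in> open_segment (c, e) (\<alpha>, 0)"
      unfolding in_segment using s0 s1 by (intro conjI exI[of _ "1 - s"]) auto
    thus ?thesis using os[OF A] by blast
  qed
  have u1: "(x + 1, s * e) \<in> interior P"
  proof -
    have "(x + 1, s * e) = (1 - (1 - s)) *\<^sub>R (c, e) + (1 - s) *\<^sub>R (\<alpha> + 1/(1-s), 0)"
      using s1 by (simp add: x_def algebra_simps)
    moreover have "(c, e) \<noteq> (\<alpha> + 1/(1-s), 0)" using e by auto
    ultimately have "(x + 1, s * e) \<in> open_segment (c, e) (\<alpha> + 1/(1-s), 0)"
      unfolding in_segment using s0 s1 by (intro conjI exI[of _ "1 - s"]) auto
    thus ?thesis using os[OF B] by blast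
  qed
  have v: "(x + b, e + s * e) \<in> interior P"
  proof -
    have "dist (x + b, e + s * e) (c, e) = sqrt ((x + b - c)^2 + (s * e)^2)"
      by (simp add: dist_Pair_Pair dist_real_def)
    also have "\<dots> \<le> \<bar>x + b - c\<bar> + \<bar>s * e\<bar>" by (rule sqrt_sum_squares_le_sum_abs)
    also have "\<dots> \<le> s * (3 + \<bar>b\<bar>)" using xbabs e s0 by (auto simp: abs_mult algebra_simps)
    also have "\<dots> < \<delta>"
    proof -
      have "s * (3 + \<bar>b\<bar>) < s * (4 + \<bar>b\<bar>)" using s0 by simp
      also have "\<dots> \<le> \<delta>" using s1(3) by (simp add: le_divide_eq mult.commute)
      finally show ?thesis .
    qed
    finally show ?thesis using ball by (auto simp: dist_commute)
  qed
  define T where "T = (\<lambda>(u::real, w::real). (of_int 1 * u + of_int bi * w + x,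
                       of_int 0 * u + of_int (if e = 1 then 1 else -1) * w + s * e))"
  have RT: "R_unimodular T"
    unfolding R_unimodular_def T_def
    by (rule exI[of _ 1], rule exI[of _ bi], rule exI[of _ 0],
        rule exI[of _ "if e = 1 then 1 else -1"], rule exI[of _ x], rule exI[of _ "s * e"]) auto
  have Te: "T (u, w) = (u + b * w + x, e * w + s * e)" for u w
    using e by (auto simp: T_def b_def)
  have "T ` Delta2 \<subseteq> convex hull {(x, s * e), (x + 1, s * e), (x + b, e + s * e)}"
  proof
    fix z assume "z \<in> T ` Delta2"
    then obtain p where p: "p \<in> Delta2" "z = T p" by blast
    then obtain u v w where uvw: "0 \<le> u" "0 \<le> v" "0 \<le> w" "u + v + w = 1"
      "p = u *\<^sub>R (0,0) + v *\<^sub>R (1,0) + w *\<^sub>R (0,1)"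
      unfolding Delta2_def convex_hull_3 by blast
    have "z = u *\<^sub>R (x, s * e) + v *\<^sub>R (x + 1, s * e) + w *\<^sub>R (x + b, e + s * e)"
    proof -
      have "p = (v, w)" using uvw by simp
      hence "z = (v + b * w + x, e * w + s * e)" using p Te by simp
      also have "\<dots> = u *\<^sub>R (x, s * e) + v *\<^sub>R (x + 1, s * e) + w *\<^sub>R (x + b, e + s * e)"
      proof -
        have uu: "u = 1 - v - w" using uvw by simp
        show ?thesis unfolding uu by (simp add: algebra_simps)
      qed
      finally show ?thesis .
    qed
    thus "z \<in> convex hull {(x, s * e), (x + 1, s * e), (x + b, e + s * e)}"
      unfolding convex_hull_3 using uvw by blast
  qed
  also have "\<dots> \<subseteq> interior P"
    using u0 u1 v by (intro hull_minimal) (auto simp: convex_interior[OF cvx])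
  finally show ?thesis using RT by blast
qed


lemma cross:
  fixes P :: "(real \<times> real) set" and z p :: "real \<times> real" and h :: real
  assumes cvx: "convex P" and z: "z \<in> interior P" and p: "p \<in> closure P"
    and sg: "(snd z - h) * (snd p - h) < 0"
  shows "\<exists>w \<in> interior P. snd w = h"
proof -
  have ne: "snd p \<noteq> snd z" using sg by auto
  define t where "t = (h - snd z) / (snd p - snd z)"
  have t: "0 < t" "t < 1"
  proof -
    have "(snd z < h \<and> h < snd p) \<or> (snd p < h \<and> h < snd z)"
      using sg by (smt (verit) mult_nonneg_nonneg mult_nonpos_nonpos)
    thus "0 < t" "t < 1" by (auto simp: t_def divide_simps)
  qed
  define w where "w = (1 - t) *\<^sub>R z + t *\<^sub>R p"
  have "z \<noteq> p" using ne by auto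
  hence "w \<in> open_segment z p" unfolding in_segment w_def using t by blast
  hence wi: "w \<in> interior P" using in_interior_closure_convex_segment[OF cvx z p] by blast
  have "snd w = snd z + t * (snd p - snd z)" by (simp add: w_def algebra_simps)
  also have "\<dots> = h" using ne by (simp add: t_def)
  finally show ?thesis using wi by blast
qed

theorem lemma5p4:
  fixes P :: "(real \<times> real) set" and a :: real
  assumes "polygon P"
    and "R_Delta2_free P"
    and "a > 0"
    and "rational_diameter P = 1 + 2 * a"
    and "closed_segment (- a, 0) (1 + a, 0) \<subseteq> P"
  shows "(\<forall>b :: int.
            interior P \<inter> closed_segment (of_int b - a, 1) (of_int b + a, 1) = {} \<and>
            interior P \<inter> closed_segment (of_int b - a, - 1) (of_int b + a, - 1) = {}) \<and>
         (a \<ge> 1 / 2 \<longrightarrow> P \<subseteq> {p. - 1 \<le> snd p \<and> snd p \<le> 1} \<and> lattice_width P \<le> 2)"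
proof -
  have poly: "polytope P" and ad: "aff_dim P = 2" using assms(1) by (auto simp: polygon_def)
  have cvx: "convex P" using poly by (rule polytope_imp_convex)
  have "affine hull P = UNIV" using ad by (simp add: aff_dim_eq_full[symmetric])
  hence ri: "rel_interior P = interior P" by (rule rel_interior_interior)
  have free: "\<not> (\<exists>T. R_unimodular T \<and> T ` Delta2 \<subseteq> interior P)"
    using assms(2) by (simp add: R_Delta2_free_def ri)
  note seg = assms(5)
  have a: "a > 0" by fact
  have P1: "\<forall>b :: int.
            interior P \<inter> closed_segment (of_int b - a, 1) (of_int b + a, 1) = {} \<and>
            interior P \<inter> closed_segment (of_int b - a, - 1) (of_int b + a, - 1) = {}"
  proof (intro allI conjI)
    fix b :: int
    show "interior P \<inter> closed_segment (of_int b - a, 1) (of_int b + a, 1) = {}"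
    proof (rule ccontr)
      assume "interior P \<inter> closed_segment (of_int b - a, 1) (of_int b + a, 1) \<noteq> {}"
      then obtain z where z0: "z \<in> interior P" "z \<in> closed_segment (of_int b - a, 1) (of_int b + a, 1)"
        by blast
      from z0(2) obtain u where u: "0 \<le> u" "u \<le> 1"
        "z = (1 - u) *\<^sub>R (of_int b - a, 1) + u *\<^sub>R (of_int b + a, 1::real)"
        unfolding in_segment(1) by blast
      note z = z0(1) u
      define c where "c = of_int b - a + 2 * a * u"
      have "z = (c, 1)" using z(4) by (simp add: c_def algebra_simps)
      moreover have "\<bar>c - of_int b\<bar> \<le> a"
      proof -
        have "c - of_int b = a * (2 * u - 1)" by (simp add: c_def algebra_simps)
        hence eq: "\<bar>c - of_int b\<bar> = a * \<bar>2 * u - 1\<bar>" using a by (simp add: abs_mult)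
        have "\<bar>2 * u - 1\<bar> \<le> 1" using z by auto
        hence "a * \<bar>2 * u - 1\<bar> \<le> a" using a by (intro mult_left_le) auto
        thus ?thesis using eq by linarith
      qed
      ultimately have "(c, 1) \<in> interior P" "\<bar>c - of_int b\<bar> \<le> a" using z by auto
      from key[OF cvx a seg this(1) this(2)] free show False by simp
    qed
    show "interior P \<inter> closed_segment (of_int b - a, - 1) (of_int b + a, - 1) = {}"
    proof (rule ccontr)
      assume "interior P \<inter> closed_segment (of_int b - a, - 1) (of_int b + a, - 1) \<noteq> {}"
      then obtain z where z0: "z \<in> interior P" "z \<in> closed_segment (of_int b - a, - 1) (of_int b + a, - 1)"
        by blast
      from z0(2) obtain u where u: "0 \<le> u" "u \<le> 1"
        "z = (1 - u) *\<^sub>R (of_int b - a, - 1) + u *\<^sub>R (of_int b + a, - (1::real))"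
        unfolding in_segment(1) by blast
      note z = z0(1) u
      define c where "c = of_int b - a + 2 * a * u"
      have "z = (c, - 1)" using z(4) by (simp add: c_def algebra_simps)
      moreover have "\<bar>c - of_int b\<bar> \<le> a"
      proof -
        have "c - of_int b = a * (2 * u - 1)" by (simp add: c_def algebra_simps)
        hence eq: "\<bar>c - of_int b\<bar> = a * \<bar>2 * u - 1\<bar>" using a by (simp add: abs_mult)
        have "\<bar>2 * u - 1\<bar> \<le> 1" using z by auto
        hence "a * \<bar>2 * u - 1\<bar> \<le> a" using a by (intro mult_left_le) auto
        thus ?thesis using eq by linarith
      qed
      ultimately have "(c, - 1) \<in> interior P" "\<bar>c - of_int b\<bar> \<le> a" using z by auto
      from key[OF cvx a seg this(1) this(2)] free show False by simp
    qed
  qed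
  have P2: "P \<subseteq> {p. - 1 \<le> snd p \<and> snd p \<le> 1} \<and> lattice_width P \<le> 2" if ah: "a \<ge> 1/2"
  proof -
    have o: "(0, 0) \<in> P" using seg_pt[OF a, of 0] a seg by auto
    hence Pne: "P \<noteq> {}" by auto
    obtain z where zi: "z \<in> interior P"
      using rel_interior_eq_empty[OF cvx] Pne ri by auto
    have cl: "P \<subseteq> closure P" by (rule closure_subset)
    have noh: "\<not> (\<exists>w \<in> interior P. snd w = e)" if e: "e = 1 \<or> e = -1" for e
    proof
      assume "\<exists>w \<in> interior P. snd w = e"
      then obtain w where w: "w \<in> interior P" "snd w = e" by blast
      have "\<bar>fst w - of_int (round (fst w))\<bar> \<le> a"
        using of_int_round_abs_le[of "fst w"] ah by (simp add: abs_minus_commute)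
      moreover have "w = (fst w, e)" using w by (cases w) auto
      ultimately have "(fst w, e) \<in> interior P" "\<bar>fst w - of_int (round (fst w))\<bar> \<le> a" using w by auto
      from key[OF cvx a seg this(1) this(2) e] free show False by simp
    qed
    have hit: "\<exists>w \<in> interior P. snd w = e"
      if e: "e = 1 \<or> e = -1" and p: "p \<in> P" and sp: "(snd p - e) * e > 0" for e p
    proof (cases "snd z = e")
      case True thus ?thesis using zi by blast
    next
      case False
      show ?thesis
      proof (cases "(snd z - e) * (snd p - e) < 0")
        case True thus ?thesis using cross[OF cvx zi _ True] p cl by blast
      next
        case F: False
        have "(snd z - e) * (snd (0::real, 0::real) - e) < 0"
        proof -
          have "(snd z - e) * (snd p - e) \<ge> 0" using F by simp
          hence "(snd z - e) * e > 0" using sp False e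
            by (smt (verit, ccfv_threshold) mult_less_0_iff mult_minus_right zero_less_mult_iff)
          thus ?thesis using e by auto
        qed
        thus ?thesis using cross[OF cvx zi _] o cl by blast
      qed
    qed
    have strip: "P \<subseteq> {p. - 1 \<le> snd p \<and> snd p \<le> 1}"
    proof
      fix p assume p: "p \<in> P"
      have "\<not> snd p > 1" using hit[of 1 p] noh[of 1] p by auto
      moreover have "\<not> snd p < -1" using hit[of "-1" p] noh[of "-1"] p by auto
      ultimately show "p \<in> {p. - 1 \<le> snd p \<and> snd p \<le> 1}" by auto
    qed
    define g where "g = (\<lambda>(u :: int \<times> int) (xy :: (real \<times> real) \<times> (real \<times> real)).
       \<bar>of_int (fst u) * (fst (fst xy) - fst (snd xy))
                          + of_int (snd u) * (snd (fst xy) - snd (snd xy))\<bar>)"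
    define f where "f = (\<lambda>u. SUP xy \<in> P \<times> P. g u xy)"
    have bdd: "bdd_above (g u ` (P \<times> P))" for u
    proof -
      have "compact (P \<times> P)" using polytope_imp_compact[OF poly] by (simp add: compact_Times)
      moreover have "continuous_on (P \<times> P) (g u)" unfolding g_def
        by (intro continuous_intros)
      ultimately have "compact (g u ` (P \<times> P))" using compact_continuous_image by blast
      thus ?thesis by (intro bounded_imp_bdd_above compact_imp_bounded)
    qed
    have f0: "0 \<le> f u" for u
    proof -
      have "g u ((0,0),(0,0)) \<le> f u" unfolding f_def using bdd o by (intro cSUP_upper) auto
      moreover have "0 \<le> g u ((0,0),(0,0))" by (simp add: g_def)
      ultimately show ?thesis by linarith
    qed
    have lw: "lattice_width P = (INF u \<in> {u :: int \<times> int. u \<noteq> (0, 0)}. f u)"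
      unfolding lattice_width_def f_def g_def by simp
    have "lattice_width P \<le> f (0, 1)" unfolding lw
      by (rule cINF_lower) (auto intro!: bdd_belowI[of _ 0] f0)
    also have "f (0, 1) \<le> 2" unfolding f_def
    proof (rule cSUP_least)
      show "P \<times> P \<noteq> {}" using Pne by auto
      fix xy assume "xy \<in> P \<times> P"
      hence "fst xy \<in> P" "snd xy \<in> P" by auto
      hence "-1 \<le> snd (fst xy)" "snd (fst xy) \<le> 1" "-1 \<le> snd (snd xy)" "snd (snd xy) \<le> 1"
        using strip by auto
      thus "g (0, 1) xy \<le> 2" by (simp add: g_def)
    qed
    finally show ?thesis using strip by simp
  qed
  show ?thesis using P1 P2 by blast
qed

end
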